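(* Consider the mining game with $N\ge 2$ miners, costs-per-hash $0<c_1\le\dots\le c_N$, reward $R>0$ and capacity parameter $\gamma\ge0$, let $h^*$ be its unique equilibrium hash rate profile, $H^*=\sum_j h_j^*>0$, and let $n$ be the number of active miners. Define the equilibrium marginal cost of miner $i$ by $MC_i^*:=c_i+\gamma h_i^*$, $1\le i\le N$. Then $(MC_i^* )_{1\le i\le N}$ is an increasing sequence, and for each $i$, $$MC_i^*<\frac{R}{H^*}\iff c_i<\frac{R}{H^*}\iff 1\le i\le n.$$ Moreover, the sequence $(c_i/MC_i^* )_{1\le i\le N}$ is increasing and the sequence $(\gamma h_i^*/MC_i^* )_{1\le i\le N}$ is decreasing.
   Context: Mining game: $N\ge2$ miners with costs-per-hash $0<c_1\le\dots\le c_N$; each miner $i$ chooses $h_i\ge0$, $H=\sum_j h_j$, and the payoff of miner $i$ is $\frac{h_i}{H}R-c_ih_i-\frac{\gamma}{2}h_i^2$ if $H>0$, and $0$ if $H=0$, where $R>0$ and $\gamma\ge 0$. An equilibrium hash rate profile is a pure-strategy Nash equilibrium $h^*\in[0,\infty)^N$ of this game; it exists and is unique. Miner $i$ is active if $h_i^*>0$. A sequence $(x_i)$ is called increasing if $x_i\le x_{i+1}$ for all $i$ and decreasing if $x_i\ge x_{i+1}$ for all $i$. *)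

theory Defs
  imports Complex_Main
begin

text \<open>Mining game with miners indexed by 1..N. A hash rate profile is a function
  h :: nat => real; only the values on 1..N matter.\<close>

definition total_hash :: "nat \<Rightarrow> (nat \<Rightarrow> real) \<Rightarrow> real" where
  "total_hash N h = (\<Sum>j=1..N. h j)"

definition payoff :: "nat \<Rightarrow> real \<Rightarrow> (nat \<Rightarrow> real) \<Rightarrow> real \<Rightarrow> (nat \<Rightarrow> real) \<Rightarrow> nat \<Rightarrow> real" where
  "payoff N R c \<gamma> h i =
     (if total_hash N h = 0 then 0
      else h i / total_hash N h * R - c i * h i - \<gamma> / 2 * (h i)^2)"

definition is_equilibrium :: "nat \<Rightarrow> real \<Rightarrow> (nat \<Rightarrow> real) \<Rightarrow> real \<Rightarrow> (nat \<Rightarrow> real) \<Rightarrow> bool" where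
  "is_equilibrium N R c \<gamma> h \<longleftrightarrow>
     (\<forall>i\<in>{1..N}. 0 \<le> h i) \<and>
     (\<forall>i\<in>{1..N}. \<forall>x\<ge>0. payoff N R c \<gamma> (h(i := x)) i \<le> payoff N R c \<gamma> h i)"

end

theory Submission
  imports Defs
begin

lemma sum_upd_lem:
  fixes h :: "nat \<Rightarrow> real"
  assumes "finite A" "i \<in> A"
  shows "sum (h(i:=x)) A = sum h A - h i + x"
proof -
  have "sum (h(i:=x)) A = (h(i:=x)) i + sum (h(i:=x)) (A - {i})"
    using assms by (simp add: sum.remove)
  also have "sum (h(i:=x)) (A - {i}) = sum h (A - {i})"
    by (rule sum.cong) auto
  also have "sum h A = h i + sum h (A - {i})" using assms by (simp add: sum.remove)
  ultimately show ?thesis by simp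
qed

lemma g_deriv:
  fixes S R c \<gamma> y :: real
  assumes "S + y \<noteq> 0"
  shows "((\<lambda>x. x / (S + x) * R - c * x - \<gamma> / 2 * x^2) has_real_derivative
          (R * S / (S + y)^2 - c - \<gamma> * y)) (at y)"
proof -
  have "((\<lambda>x. x / (S + x) * R - c * x - \<gamma> / 2 * x^2) has_real_derivative
          (((1 * (S + y) - y * 1) / (S + y)^2) * R - c * 1 - \<gamma> / 2 * (2 * y ^ 1 * 1))) (at y)"
    using assms
    by (intro derivative_eq_intros) (auto simp: power2_eq_square)
  moreover have "((1 * (S + y) - y * 1) / (S + y)^2) * R - c * 1 - \<gamma> / 2 * (2 * y ^ 1 * 1)
     = R * S / (S + y)^2 - c - \<gamma> * y" by (simp add: field_simps)
  ultimately show ?thesis by metis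
qed

lemma foc:
  fixes S R c \<gamma> y :: real
  assumes S: "S \<ge> 0" and y: "y \<ge> 0" and Sy: "S + y > 0"
    and c: "c > 0" and g: "\<gamma> \<ge> 0"
    and mx: "\<forall>x\<ge>0. x / (S + x) * R - c * x - \<gamma> / 2 * x^2 \<le> y / (S + y) * R - c * y - \<gamma> / 2 * y^2"
  shows "(y > 0 \<longrightarrow> R * S / (S + y)^2 = c + \<gamma> * y) \<and> (y = 0 \<longrightarrow> R / S \<le> c)"
proof (intro conjI impI)
  let ?g = "\<lambda>x. x / (S + x) * R - c * x - \<gamma> / 2 * x^2"
  assume "y > 0"
  have D: "(?g has_real_derivative (R * S / (S + y)^2 - c - \<gamma> * y)) (at y)"
    using g_deriv[of S y R c \<gamma>] Sy by simp
  have "\<forall>z. \<bar>y - z\<bar> < y \<longrightarrow> ?g z \<le> ?g y" using mx by auto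
  then have "R * S / (S + y)^2 - c - \<gamma> * y = 0"
    using DERIV_local_max[OF D \<open>y > 0\<close>] by blast
  then show "R * S / (S + y)^2 = c + \<gamma> * y" by simp
next
  let ?g = "\<lambda>x. x / (S + x) * R - c * x - \<gamma> / 2 * x^2"
  assume y0: "y = 0"
  show "R / S \<le> c"
  proof (rule ccontr)
    assume "\<not> R / S \<le> c"
    then have pos: "0 < R * S / (S + y)^2 - c - \<gamma> * y" using y0 Sy
      by (simp add: power2_eq_square)
    have D: "(?g has_real_derivative (R * S / (S + y)^2 - c - \<gamma> * y)) (at y)"
      using g_deriv[of S y R c \<gamma>] Sy by simp
    obtain d where d: "d > 0" "\<forall>t>0. t < d \<longrightarrow> ?g y < ?g (y + t)"
      using DERIV_pos_inc_right[OF D pos] by blast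
    have "?g y < ?g (y + d/2)" using d by auto
    moreover have "?g (y + d/2) \<le> ?g y" using mx y d by auto
    ultimately show False by simp
  qed
qed

lemma char:
  fixes N :: nat and R \<gamma> :: real and c h :: "nat \<Rightarrow> real"
  assumes N2: "N \<ge> 2"
    and cpos: "\<forall>i\<in>{1..N}. 0 < c i"
    and Rpos: "R > 0"
    and gam: "\<gamma> \<ge> 0"
    and eq: "is_equilibrium N R c \<gamma> h"
  shows "total_hash N h > 0 \<and> (\<forall>i\<in>{1..N}. h i \<ge> 0 \<and>
     (h i > 0 \<longrightarrow> c i + \<gamma> * h i = R / total_hash N h - R / (total_hash N h)^2 * h i) \<and>
     (h i = 0 \<longrightarrow> R / total_hash N h \<le> c i))"
proof -
  define H where "H = total_hash N h"
  have nn: "\<forall>i\<in>{1..N}. 0 \<le> h i" and dev: "\<forall>i\<in>{1..N}. \<forall>x\<ge>0. payoff N R c \<gamma> (h(i := x)) i \<le> payoff N R c \<gamma> h i"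
    using eq unfolding is_equilibrium_def by auto
  have tu: "total_hash N (h(i:=x)) = H - h i + x" if "i \<in> {1..N}" for i x
    unfolding total_hash_def H_def using sum_upd_lem[of "{1..N}" i h x] that by simp
  have Hnn: "H \<ge> 0" unfolding H_def total_hash_def using nn by (intro sum_nonneg) auto
  have Hpos: "H > 0"
  proof (rule ccontr)
    assume "\<not> H > 0"
    then have H0: "H = 0" using Hnn by simp
    have all0: "\<forall>j\<in>{1..N}. h j = 0"
      using H0 nn unfolding H_def total_hash_def using sum_nonneg_eq_0_iff[of "{1..N}" h] by auto
    have i1: "(1::nat) \<in> {1..N}" using N2 by simp
    define x where "x = R / (R + c 1 + \<gamma>)"
    have c1: "c 1 > 0" using cpos i1 by simp
    have xpos: "x > 0" and xl1: "x < 1" using Rpos c1 gam by (auto simp: x_def)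
    have "x * (c 1 + \<gamma>) < R"
    proof -
      have "x * (c 1 + \<gamma>) = R * ((c 1 + \<gamma>) / (R + c 1 + \<gamma>))" by (simp add: x_def)
      also have "\<dots> < R * 1" using Rpos c1 gam by (intro mult_strict_left_mono) auto
      finally show ?thesis by simp
    qed
    moreover have "\<gamma> / 2 * x^2 \<le> \<gamma> * x"
    proof -
      have "x^2 \<le> x" using xpos xl1 by (simp add: power2_eq_square mult_le_cancel_right1 less_imp_le) 
      then have "\<gamma> / 2 * x^2 \<le> \<gamma> / 2 * x" using gam by (intro mult_left_mono) auto
      also have "\<dots> \<le> \<gamma> * x" using gam xpos by simp
      finally show ?thesis .
    qed
    ultimately have pos: "0 < R - c 1 * x - \<gamma> / 2 * x^2" by (simp add: algebra_simps)
    have "payoff N R c \<gamma> (h(1 := x)) 1 = R - c 1 * x - \<gamma> / 2 * x^2"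
      using tu[OF i1, of x] H0 all0 i1 xpos unfolding payoff_def by simp
    moreover have "payoff N R c \<gamma> h 1 = 0" unfolding payoff_def using H0 H_def by simp
    ultimately show False using dev[rule_format, OF i1, of x] xpos pos by linarith
  qed
  have "\<forall>i\<in>{1..N}. h i \<ge> 0 \<and>
     (h i > 0 \<longrightarrow> c i + \<gamma> * h i = R / H - R / H^2 * h i) \<and>
     (h i = 0 \<longrightarrow> R / H \<le> c i)"
  proof
    fix i assume i: "i \<in> {1..N}"
    define S where "S = H - h i"
    have S: "S \<ge> 0"
    proof -
      have "H = h i + sum h ({1..N} - {i})" unfolding H_def total_hash_def
        using i by (simp add: sum.remove)
      moreover have "sum h ({1..N} - {i}) \<ge> 0" using nn by (intro sum_nonneg) auto
      ultimately show ?thesis unfolding S_def by simp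
    qed
    have SH: "S + h i = H" unfolding S_def by simp
    have mx: "\<forall>x\<ge>0. x / (S + x) * R - c i * x - \<gamma> / 2 * x^2 \<le> h i / (S + h i) * R - c i * h i - \<gamma> / 2 * (h i)^2"
    proof (intro allI impI)
      fix x :: real assume x: "x \<ge> 0"
      have "payoff N R c \<gamma> (h(i := x)) i = x / (S + x) * R - c i * x - \<gamma> / 2 * x^2"
        proof (cases "S + x = 0")
        case True then have "x = 0" using S x by linarith
        then show ?thesis unfolding payoff_def tu[OF i] S_def[symmetric] by simp
      qed (simp add: payoff_def tu[OF i] S_def[symmetric])
      moreover have "payoff N R c \<gamma> h i = h i / (S + h i) * R - c i * h i - \<gamma> / 2 * (h i)^2"
        unfolding payoff_def SH H_def[symmetric] using Hpos by simp
      ultimately show "x / (S + x) * R - c i * x - \<gamma> / 2 * x^2 \<le> h i / (S + h i) * R - c i * h i - \<gamma> / 2 * (h i)^2"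
        using dev i x by metis
    qed
    have F: "(h i > 0 \<longrightarrow> R * S / (S + h i)^2 = c i + \<gamma> * h i) \<and> (h i = 0 \<longrightarrow> R / S \<le> c i)"
      using foc[OF S _ _ _ gam mx] nn i SH Hpos cpos by auto
    have "R * S / (S + h i)^2 = R / H - R / H^2 * h i"
      unfolding SH using Hpos by (simp add: S_def field_simps power2_eq_square)
    then show "h i \<ge> 0 \<and>
     (h i > 0 \<longrightarrow> c i + \<gamma> * h i = R / H - R / H^2 * h i) \<and>
     (h i = 0 \<longrightarrow> R / H \<le> c i)" using F nn i S_def by auto
  qed
  then show ?thesis using Hpos unfolding H_def by blast
qed

lemma pair:
  fixes a b \<gamma> c1 c2 h1 h2 :: real
  assumes b: "b > 0" and g: "\<gamma> \<ge> 0" and c1: "c1 > 0" and c12: "c1 \<le> c2"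
    and h1: "h1 \<ge> 0" and h2: "h2 \<ge> 0"
    and A1: "h1 > 0 \<longrightarrow> c1 + \<gamma> * h1 = a - b * h1" and I1: "h1 = 0 \<longrightarrow> a \<le> c1"
    and A2: "h2 > 0 \<longrightarrow> c2 + \<gamma> * h2 = a - b * h2" and I2: "h2 = 0 \<longrightarrow> a \<le> c2"
  shows "c1 + \<gamma> * h1 \<le> c2 + \<gamma> * h2 \<and> c1 / (c1 + \<gamma> * h1) \<le> c2 / (c2 + \<gamma> * h2)
    \<and> \<gamma> * h2 / (c2 + \<gamma> * h2) \<le> \<gamma> * h1 / (c1 + \<gamma> * h1)"
proof -
  have M1: "c1 + \<gamma> * h1 > 0" using c1 g h1 by (simp add: add_pos_nonneg)
  have M2: "c2 + \<gamma> * h2 > 0" using c1 c12 g h2 by (simp add: add_pos_nonneg)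
  have P: "c1 + \<gamma> * h1 \<le> c2 + \<gamma> * h2 \<and> c1 * (c2 + \<gamma> * h2) \<le> c2 * (c1 + \<gamma> * h1)"
  proof (cases "h1 > 0")
    case a1: True
    show ?thesis
    proof (cases "h2 > 0")
      case True
      have e1: "(b + \<gamma>) * h1 = a - c1" "(b + \<gamma>) * h2 = a - c2" using A1 A2 a1 True by (auto simp: algebra_simps)
      have "(b + \<gamma>) * (h1 - h2) \<ge> 0" using e1 c12 by (simp add: algebra_simps)
      then have hh: "h2 \<le> h1" using b g by (simp add: zero_le_mult_iff)
      have ce1: "c1 = a - (b + \<gamma>) * h1" using e1 by simp
      have ce2: "c2 = a - (b + \<gamma>) * h2" using e1 by simp
      have "c1 * (c2 + \<gamma> * h2) - c2 * (c1 + \<gamma> * h1) = a * \<gamma> * (h2 - h1)"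
        unfolding ce1 ce2 by (simp add: algebra_simps)
      moreover have "a \<ge> 0" using A1 a1 b c1 g h1 by (smt (verit) mult_nonneg_nonneg mult_pos_pos)
      ultimately have "c1 * (c2 + \<gamma> * h2) - c2 * (c1 + \<gamma> * h1) \<le> 0"
        using hh g by (simp add: mult_nonneg_nonpos)
      moreover have "c1 + \<gamma> * h1 \<le> c2 + \<gamma> * h2" using A1 A2 a1 True mult_left_mono[OF hh, of b] b by linarith
      ultimately show ?thesis by simp
    next
      case False
      then have "h2 = 0" using h2 by simp
      then have "a \<le> c2" using I2 by simp
      moreover have "b * h1 > 0" using a1 b by simp
      moreover have "c1 + \<gamma> * h1 \<le> a" using A1 a1 \<open>b * h1 > 0\<close> by linarith
      moreover have "c1 * c2 \<le> c2 * (c1 + \<gamma> * h1)" using g h1 c1 c12 by (simp add: algebra_simps)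
      ultimately show ?thesis using \<open>h2 = 0\<close> by simp
    qed
  next
    case False
    then have z1: "h1 = 0" using h1 by simp
    then have "a \<le> c1" using I1 by simp
    have "h2 = 0"
    proof (rule ccontr)
      assume "h2 \<noteq> 0" then have "h2 > 0" using h2 by simp
      then have "c2 + \<gamma> * h2 = a - b * h2" using A2 by simp
      moreover have "b * h2 > 0" using b \<open>h2 > 0\<close> by simp
      moreover have "\<gamma> * h2 \<ge> 0" using g h2 by simp
      ultimately show False using \<open>a \<le> c1\<close> c12 by linarith
    qed
    then show ?thesis using z1 c12 by (simp add: mult.commute)
  qed
  have Q: "c1 / (c1 + \<gamma> * h1) \<le> c2 / (c2 + \<gamma> * h2)"
    using P M1 M2 by (simp add: divide_simps mult.commute)
  have e: "\<gamma> * h1 / (c1 + \<gamma> * h1) = 1 - c1 / (c1 + \<gamma> * h1)" "\<gamma> * h2 / (c2 + \<gamma> * h2) = 1 - c2 / (c2 + \<gamma> * h2)"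
    using M1 M2 by (simp_all add: field_simps)
  show ?thesis using P Q e by simp
qed

lemma prefix_lem:
  fixes A :: "nat set"
  assumes sub: "A \<subseteq> {1..N}" and down: "\<And>i j. j \<in> A \<Longrightarrow> 1 \<le> i \<Longrightarrow> i \<le> j \<Longrightarrow> i \<in> A"
  shows "A = {1..card A}"
proof (cases "A = {}")
  case True then show ?thesis by simp
next
  case False
  have fin: "finite A" using sub finite_subset by blast
  define m where "m = Max A"
  have mA: "m \<in> A" using fin False by (simp add: m_def)
  have "A = {1..m}"
  proof
    show "A \<subseteq> {1..m}" using sub fin m_def by auto
    show "{1..m} \<subseteq> A" using down mA by auto
  qed
  then show ?thesis by simp
qed

theorem proposition4p2:
  fixes N :: nat and R \<gamma> :: real and c h :: "nat \<Rightarrow> real"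
  assumes N2: "N \<ge> 2"
    and cpos: "\<forall>i\<in>{1..N}. 0 < c i"
    and cmono: "\<forall>i\<in>{1..<N}. c i \<le> c (i + 1)"
    and Rpos: "R > 0"
    and gam: "\<gamma> \<ge> 0"
    and eq: "is_equilibrium N R c \<gamma> h"
  shows "let H = total_hash N h;
             n = card {i\<in>{1..N}. h i > 0};
             MC = (\<lambda>i. c i + \<gamma> * h i)
         in H > 0
            \<and> (\<forall>i\<in>{1..<N}. MC i \<le> MC (i + 1))
            \<and> (\<forall>i\<in>{1..N}. (MC i < R / H \<longleftrightarrow> c i < R / H) \<and> (c i < R / H \<longleftrightarrow> i \<le> n))
            \<and> (\<forall>i\<in>{1..<N}. c i / MC i \<le> c (i + 1) / MC (i + 1))
            \<and> (\<forall>i\<in>{1..<N}. \<gamma> * h (i + 1) / MC (i + 1) \<le> \<gamma> * h i / MC i)"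
proof -
  define H where "H = total_hash N h"
  define a where "a = R / H"
  define b where "b = R / H^2"
  have C: "H > 0 \<and> (\<forall>i\<in>{1..N}. h i \<ge> 0 \<and>
     (h i > 0 \<longrightarrow> c i + \<gamma> * h i = a - b * h i) \<and>
     (h i = 0 \<longrightarrow> a \<le> c i))"
    using char[OF N2 cpos Rpos gam eq] unfolding H_def a_def b_def by simp
  then have Hpos: "H > 0" and hnn: "\<And>i. i \<in> {1..N} \<Longrightarrow> h i \<ge> 0"
    and Act: "\<And>i. i \<in> {1..N} \<Longrightarrow> h i > 0 \<Longrightarrow> c i + \<gamma> * h i = a - b * h i"
    and Ina: "\<And>i. i \<in> {1..N} \<Longrightarrow> h i = 0 \<Longrightarrow> a \<le> c i" by auto
  have bpos: "b > 0" using Hpos Rpos by (simp add: b_def)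
  have actiff: "h i > 0 \<longleftrightarrow> c i < a" if i: "i \<in> {1..N}" for i
  proof
    assume hp: "h i > 0"
    have "b * h i > 0" "\<gamma> * h i \<ge> 0" using bpos hp gam by simp_all
    then show "c i < a" using Act[OF i hp] by linarith
  next
    assume "c i < a"
    then show "h i > 0" using Ina[OF i] hnn[OF i] by force
  qed
  have MCiff: "c i + \<gamma> * h i < a \<longleftrightarrow> c i < a" if i: "i \<in> {1..N}" for i
  proof (cases "h i > 0")
    case True
    have "b * h i > 0" using bpos True by simp
    then show ?thesis using Act[OF i True] actiff[OF i] True by linarith
  next
    case False
    then have "h i = 0" using hnn[OF i] by simp
    then show ?thesis by simp
  qed
  have cmon: "c i \<le> c j" if "1 \<le> i" "i \<le> j" "j \<le> N" for i j
    using that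
  proof (induction j)
    case 0 then show ?case by simp
  next
    case (Suc j)
    show ?case
    proof (cases "i = Suc j")
      case True then show ?thesis by simp
    next
      case False
      then have "i \<le> j" using Suc by simp
      then have "c i \<le> c j" using Suc by simp
      moreover have "c j \<le> c (j + 1)" using cmono Suc \<open>i \<le> j\<close> by simp
      ultimately show ?thesis by simp
    qed
  qed
  define A where "A = {i\<in>{1..N}. c i < a}"
  have Aeq: "A = {1..card A}"
  proof (rule prefix_lem[where N = N])
    show "A \<subseteq> {1..N}" unfolding A_def by auto
    fix i j assume "j \<in> A" "1 \<le> i" "i \<le> j"
    then show "i \<in> A" unfolding A_def using cmon[of i j] by auto
  qed
  have Aset: "{i\<in>{1..N}. h i > 0} = A" unfolding A_def using actiff by auto
  have pref: "c i < a \<longleftrightarrow> i \<le> card {i\<in>{1..N}. h i > 0}" if i: "i \<in> {1..N}" for i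
  proof -
    have "c i < a \<longleftrightarrow> i \<in> A" using i unfolding A_def by auto
    also have "\<dots> \<longleftrightarrow> i \<le> card A" using i by (subst Aeq) auto
    finally show ?thesis using Aset by simp
  qed
  have P: "c i + \<gamma> * h i \<le> c (i+1) + \<gamma> * h (i+1) \<and> c i / (c i + \<gamma> * h i) \<le> c (i+1) / (c (i+1) + \<gamma> * h (i+1))
    \<and> \<gamma> * h (i+1) / (c (i+1) + \<gamma> * h (i+1)) \<le> \<gamma> * h i / (c i + \<gamma> * h i)" if i: "i \<in> {1..<N}" for i
  proof -
    have i1: "i \<in> {1..N}" and i2: "i + 1 \<in> {1..N}" using i by auto
    show ?thesis
      apply (rule pair[OF bpos gam])
      using cpos i1 apply simp
      using cmono i apply simp
      using hnn[OF i1] hnn[OF i2] Act[OF i1] Act[OF i2] Ina[OF i1] Ina[OF i2] by auto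
  qed
  show ?thesis unfolding Let_def H_def[symmetric] a_def[symmetric]
    using Hpos P MCiff pref by auto
qed

end
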